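(* Let $A$ be the $N\times N$ tridiagonal matrix described below, block partitioned as $A = \begin{bmatrix} A_{LL} & A_{LI} \\ A_{IL} & A_{II}\end{bmatrix}$, and let $M = \begin{bmatrix} A_{LL} & A_{LI} \\ A_{IL} & M_{II}\end{bmatrix}$, where $M_{II}$ is the upper triangular part (including the diagonal) of $A_{II}$. Assume that there is a constant, $\alpha$, such that the discretization mesh satisfies $\alpha/N \leq h_i$ for $N_L+1 \leq i \leq N$. Then, any eigenvalue, $\lambda$, of $M^{-1}A$ satisfies \[ 1-\frac{8\varepsilon N}{\underline{C}\alpha} \leq \lambda \leq 1, \] where $\underline{C} > 0$ is the lower bound on $c(x)$.
   Context: Consider $-\varepsilon u'' - c(x)u' + r(x)u = f$ on $(0,1)$, $u(0)=u(1)=0$, with $\varepsilon\in(0,1]$, $0<\underline{C}\le c(x)\le\overline{C}$ and $r(x)\ge 0$ on $[0,1]$. On a mesh $0=x_0<x_1<\dots<x_N=1$ with $h_i = x_i - x_{i-1}$, $\bar h_i = (h_i+h_{i+1})/2$, $c_i=c(x_i)$, $r_i=r(x_i)$, $A$ is the tridiagonal upwind finite-difference matrix whose row $i$ has stencil $\left[ -\frac{\varepsilon}{h_i\bar h_i} , \frac{\varepsilon}{\bar h_i}\left(\frac{1}{h_i} + \frac{1}{h_{i+1}}\right) + \frac{c_i}{h_{i+1}} + r_i , -\frac{\varepsilon}{h_{i+1}\bar h_i} -\frac{c_i}{h_{i+1}} \right]$. The unknowns are split into a layer set $L$ (first $N_L$ indices, fine meshwidths near the layer, including the transition point) and an interior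 set $I$ (remaining $N_I$ indices), with $N=N_L+N_I$. *)

theory Defs
  imports Complex_Main "Jordan_Normal_Form.Char_Poly"
begin

definition mesh_h :: "(nat \<Rightarrow> real) \<Rightarrow> nat \<Rightarrow> real" where
  "mesh_h x i = x i - x (i - 1)"

definition mesh_hbar :: "(nat \<Rightarrow> real) \<Rightarrow> nat \<Rightarrow> real" where
  "mesh_hbar x i = (mesh_h x i + mesh_h x (Suc i)) / 2"

text \<open>The unknowns are the
  interior nodes x_1, ..., x_(N-1); unknown i is stored at (0-based) matrix index i - 1.
  Row i has stencil [ -eps/(h_i hbar_i),
    eps/hbar_i (1/h_i + 1/h_(i+1)) + c_i/h_(i+1) + r_i,
    -eps/(h_(i+1) hbar_i) - c_i/h_(i+1) ].\<close>
definition upwind_matrix ::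
  "real \<Rightarrow> (real \<Rightarrow> real) \<Rightarrow> (real \<Rightarrow> real) \<Rightarrow> (nat \<Rightarrow> real) \<Rightarrow> nat \<Rightarrow> real mat" where
  "upwind_matrix eps c r x N = mat (N - 1) (N - 1) (\<lambda>(j, k).
     let i = Suc j in
     if k = j then eps / mesh_hbar x i * (1 / mesh_h x i + 1 / mesh_h x (Suc i))
                   + c (x i) / mesh_h x (Suc i) + r (x i)
     else if Suc k = j then - eps / (mesh_h x i * mesh_hbar x i)
     else if k = Suc j then - eps / (mesh_h x (Suc i) * mesh_hbar x i) - c (x i) / mesh_h x (Suc i)
     else 0)"

text \<open>Block preconditioner M = [A_LL A_LI; A_IL M_II] where the layer set L consists of the
  first NL indices (0-based indices < NL) and M_II is the upper triangular part (including the
  diagonal) of A_II: i.e. the strictly lower triangular entries of the II block are dropped.\<close>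
definition block_precond :: "real mat \<Rightarrow> nat \<Rightarrow> real mat" where
  "block_precond A NL = mat (dim_row A) (dim_col A) (\<lambda>(j, k).
     if NL \<le> k \<and> k < j then 0 else A $$ (j, k))"

end

theory Submission imports Defs begin

lemma tri_sum:
  fixes x y z :: "'a::comm_monoid_add"
  shows "(\<Sum>k<n. (if k = j then x else if Suc k = j then y else if k = Suc j then z else 0))
    = (if j < n then x else 0) + (if 0 < j \<and> j - 1 < n then y else 0) + (if Suc j < n then z else 0)"
proof (induction n)
  case 0 then show ?case by simp
next
  case (Suc n)
  show ?case unfolding sum.lessThan_Suc Suc
    by (cases "n = j"; cases "Suc n = j"; cases "n = Suc j"; auto simp: ac_simps)
qed


lemma amgm_aux:
  fixes w U V P x y :: real
  assumes "0 \<le> w" "0 \<le> U" "0 \<le> V" "0 \<le> P" "w^2 \<le> P * U * V" "0 \<le> x" "0 \<le> y"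
  shows "w * x * y \<le> sqrt P / 2 * (U * x^2 + V * y^2)"
proof -
  have w: "w \<le> sqrt P * sqrt U * sqrt V"
    using assms by (metis real_sqrt_le_iff real_sqrt_mult real_sqrt_pow2_iff real_sqrt_unique)
  have "0 \<le> (sqrt U * x - sqrt V * y)^2" by simp
  hence am: "2 * (sqrt U * x) * (sqrt V * y) \<le> U * x^2 + V * y^2"
    using assms by (simp add: power2_eq_square algebra_simps)
  have "w * x * y \<le> sqrt P * sqrt U * sqrt V * x * y"
    using w assms by (simp add: mult_right_mono)
  also have "\<dots> = sqrt P / 2 * (2 * (sqrt U * x) * (sqrt V * y))" by simp
  also have "\<dots> \<le> sqrt P / 2 * (U * x^2 + V * y^2)"
    using am assms by (intro mult_left_mono) auto
  finally show ?thesis .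
qed

fun wts :: "(nat \<Rightarrow> real) \<Rightarrow> (nat \<Rightarrow> real) \<Rightarrow> nat \<Rightarrow> real" where
  "wts a b 0 = 1"
| "wts a b (Suc k) = wts a b k * b k / a (Suc k)"

lemma jacobi:
  fixes Y :: "nat \<Rightarrow> complex" and nu :: complex and dl a b :: "nat \<Rightarrow> real" and m :: nat and P :: real
  assumes dpos: "\<forall>k<m. 0 < dl k" and a0: "a 0 = 0" and apos: "\<forall>k. 0<k \<and> k<m \<longrightarrow> 0 < a k"
   and bpos: "\<forall>k. Suc k < m \<longrightarrow> 0 < b k" and Ym: "Y m = 0"
   and eq: "\<forall>k<m. nu * dl k * Y k = a k * Y (k-1) + b k * Y (Suc k)"
   and nz: "\<exists>k<m. Y k \<noteq> 0" and P: "0 \<le> P"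
   and pb: "\<forall>k. 0<k \<and> k<m \<longrightarrow> a k * b (k-1) \<le> P * dl k * dl (k-1)"
  shows "nu \<in> \<real> \<and> (Re nu)^2 \<le> 4*P"
proof -
  define w where "w = wts a b"
  have wpos: "\<forall>k<m. 0 < w k"
  proof (intro allI impI)
    fix k assume "k < m" thus "0 < w k"
      by (induction k) (use apos bpos in \<open>auto simp: w_def\<close>)
  qed
  have wrel: "w k * b k = w (Suc k) * a (Suc k)" if "Suc k < m" for k
  proof -
    have "a (Suc k) > 0" using apos that by auto
    thus ?thesis by (simp add: w_def)
  qed
  define T where "T = (\<Sum>k<m. complex_of_real (w k * a k) * (cnj (Y k) * Y (k-1)))"
  define R where "R = (\<lambda>k. w k * dl k * (cmod (Y k))^2)"
  define Q where "Q = (\<Sum>k<m. R k)"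
  have Rnn: "\<forall>k<m. 0 \<le> R k"
  proof (intro allI impI)
    fix k assume "k < m"
    hence "0 \<le> w k" "0 \<le> dl k" using wpos dpos by (auto simp: less_imp_le)
    thus "0 \<le> R k" by (simp add: R_def)
  qed
  have Qpos: "0 < Q"
  proof -
    obtain k where k: "k < m" "Y k \<noteq> 0" using nz by blast
    have "0 < R k" using k wpos dpos by (auto simp: R_def intro!: mult_pos_pos)
    also have "R k \<le> Q" unfolding Q_def
      by (rule member_le_sum) (use k Rnn in auto)
    finally show ?thesis .
  qed
  define F where "F = (\<lambda>k. complex_of_real (w k * a k) * (cnj (Y (k-1)) * Y k))"
  have "nu * Q = (\<Sum>k<m. complex_of_real (w k) * cnj (Y k) * (nu * dl k * Y k))"
    unfolding Q_def R_def of_real_sum sum_distrib_left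
    by (rule sum.cong) (auto simp: complex_norm_square[symmetric] mult_ac)
  also have "\<dots> = (\<Sum>k<m. complex_of_real (w k) * cnj (Y k) * (a k * Y (k-1) + b k * Y (Suc k)))"
    using eq by (intro sum.cong) auto
  also have "\<dots> = T + (\<Sum>k<m. complex_of_real (w k * b k) * (cnj (Y k) * Y (Suc k)))"
    unfolding T_def sum.distrib[symmetric] by (rule sum.cong) (auto simp: algebra_simps)
  also have "(\<Sum>k<m. complex_of_real (w k * b k) * (cnj (Y k) * Y (Suc k))) = (\<Sum>k<m. F (Suc k))"
  proof (rule sum.cong)
    fix k assume "k \<in> {..<m}"
    show "complex_of_real (w k * b k) * (cnj (Y k) * Y (Suc k)) = F (Suc k)"
    proof (cases "Suc k < m")
      case True thus ?thesis using wrel[OF True] by (simp add: F_def)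
    next
      case False hence "Suc k = m" using \<open>k \<in> {..<m}\<close> by auto
      thus ?thesis using Ym by (simp add: F_def)
    qed
  qed simp
  also have "(\<Sum>k<m. F (Suc k)) = (\<Sum>k<m. F k)"
  proof -
    have "(\<Sum>k<Suc m. F k) = F 0 + (\<Sum>k<m. F (Suc k))" by (rule sum.lessThan_Suc_shift)
    moreover have "(\<Sum>k<Suc m. F k) = (\<Sum>k<m. F k) + F m" by simp
    moreover have "F 0 = 0" "F m = 0" using a0 Ym by (auto simp: F_def)
    ultimately show ?thesis by simp
  qed
  also have "(\<Sum>k<m. F k) = cnj T" unfolding T_def F_def cnj_sum by (simp add: mult_ac)
  finally have nuQ: "nu * Q = complex_of_real (2 * Re T)" by (simp add: complex_add_cnj)
  have nueq: "nu = complex_of_real (2 * Re T / Q)"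
    using nuQ Qpos by (simp add: field_simps)
  have Renu: "Re nu * Q = 2 * Re T" using nueq Qpos by simp
  have "cmod T \<le> (\<Sum>k<m. w k * a k * (cmod (Y k) * cmod (Y (k-1))))"
    unfolding T_def
    apply (rule order.trans[OF norm_sum])
    apply (rule sum_mono)
  proof -
    fix i assume i: "i \<in> {..<m}"
    have "\<bar>w i\<bar> = w i" using wpos i by auto
    moreover have "\<bar>a i\<bar> = a i" using apos a0 i by (cases "i = 0") auto
    ultimately show "cmod (complex_of_real (w i * a i) * (cnj (Y i) * Y (i - 1)))
         \<le> w i * a i * (cmod (Y i) * cmod (Y (i - 1)))"
      by (simp add: norm_mult abs_mult)
  qed
  also have "\<dots> \<le> (\<Sum>k<m. sqrt P / 2 * (R k + (if k = 0 then 0 else R (k-1))))"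
  proof (rule sum_mono)
    fix k assume k: "k \<in> {..<m}"
    show "w k * a k * (cmod (Y k) * cmod (Y (k-1))) \<le> sqrt P / 2 * (R k + (if k = 0 then 0 else R (k-1)))"
    proof (cases "k = 0")
      case True thus ?thesis using a0 Rnn k P by auto
    next
      case False
      then obtain j where j: "k = Suc j" by (cases k) auto
      have jm: "Suc j < m" using k j by auto
      have wj: "0 < w (Suc j)" "0 < w j" using wpos jm by auto
      have pbk: "a k * b (k-1) \<le> P * dl k * dl (k-1)" using pb False k by auto
      have e1: "(w k * a k)^2 = (w k * w j) * (a k * b (k-1))"
        using wrel[OF jm] j by (simp add: power2_eq_square mult_ac)
      have e2: "(w k * w j) * (a k * b (k-1)) \<le> (w k * w j) * (P * dl k * dl (k-1))"
        using wj j pbk by (intro mult_left_mono) auto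
      have e3: "(w k * w j) * (P * dl k * dl (k-1)) = P * (w k * dl k) * (w (k-1) * dl (k-1))" using j by simp
      have sq: "(w k * a k)^2 \<le> P * (w k * dl k) * (w (k-1) * dl (k-1))" using e1 e2 e3 by linarith
      have "w k * a k * cmod (Y k) * cmod (Y (k-1)) \<le> sqrt P / 2 * ((w k * dl k) * (cmod (Y k))^2 + (w (k-1) * dl (k-1)) * (cmod (Y (k-1)))^2)"
        apply (rule amgm_aux[OF _ _ _ P sq])
      proof -
        have pos: "0 < w k" "0 < a k" "0 < dl k" "0 < w (k-1)" "0 < dl (k-1)"
          using wpos dpos apos k j jm False by auto
        show "0 \<le> w k * a k" "0 \<le> w k * dl k" "0 \<le> w (k-1) * dl (k-1)"
          using pos by (auto intro!: mult_nonneg_nonneg)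
      qed auto
      thus ?thesis using False by (simp add: R_def mult_ac)
    qed
  qed
  also have "\<dots> = sqrt P / 2 * (Q + (\<Sum>k<m. (if k = 0 then 0 else R (k-1))))"
    unfolding Q_def sum_distrib_left[symmetric] sum.distrib[symmetric] by simp
  also have "(\<Sum>k<m. (if k = 0 then 0 else R (k-1))) \<le> Q"
  proof (cases m)
    case 0 thus ?thesis by (simp add: Q_def)
  next
    case (Suc m')
    have "(\<Sum>k<m. (if k = 0 then 0 else R (k-1))) = (\<Sum>k<m'. R k)"
      unfolding Suc sum.lessThan_Suc_shift by simp
    also have "\<dots> \<le> (\<Sum>k<m. R k)" unfolding Suc using Rnn Suc by simp
    finally show ?thesis by (simp add: Q_def)
  qed
  hence "sqrt P / 2 * (Q + (\<Sum>k<m. (if k = 0 then 0 else R (k-1)))) \<le> sqrt P / 2 * (Q + Q)"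
    using P by (intro mult_left_mono) auto
  finally have Tb: "cmod T \<le> sqrt P * Q" by simp
  have "\<bar>Re nu\<bar> * Q = 2 * \<bar>Re T\<bar>" using Renu Qpos by (metis abs_mult abs_of_pos abs_numeral)
  also have "\<dots> \<le> 2 * cmod T" using abs_Re_le_cmod by simp
  also have "\<dots> \<le> 2 * sqrt P * Q" using Tb by simp
  finally have "\<bar>Re nu\<bar> \<le> 2 * sqrt P" using Qpos by simp
  hence "(Re nu)^2 \<le> (2 * sqrt P)^2"
    by (metis abs_ge_zero power2_abs power_mono)
  also have "\<dots> = 4 * P" using P by (simp add: power2_eq_square)
  finally have "(Re nu)^2 \<le> 4 * P" .
  moreover have "nu \<in> \<real>" using nueq by simp
  ultimately show ?thesis by simp
qed


fun Dp :: "(nat \<Rightarrow> real) \<Rightarrow> (nat \<Rightarrow> real) \<Rightarrow> (nat \<Rightarrow> real) \<Rightarrow> nat \<Rightarrow> real" where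
  "Dp d al be 0 = d 0"
| "Dp d al be (Suc j) = d (Suc j) - al (Suc j) * be j / Dp d al be j"

lemma Dp_ge:
  assumes "\<forall>j\<le>K. 0 < be j \<and> 0 \<le> al j \<and> al j + be j \<le> d j"
  shows "j \<le> K \<Longrightarrow> be j \<le> Dp d al be j"
proof (induction j)
  case 0 thus ?case using assms by force
next
  case (Suc j)
  hence IH: "be j \<le> Dp d al be j" by auto
  have bj: "0 < be j" using assms Suc.prems by auto
  have h: "0 \<le> al (Suc j)" "al (Suc j) + be (Suc j) \<le> d (Suc j)" using assms Suc.prems by auto
  have "be j / Dp d al be j \<le> 1" using IH bj by simp
  hence "al (Suc j) * (be j / Dp d al be j) \<le> al (Suc j)"
    using h by (metis mult_left_le)
  thus ?case using h by simp
qed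

lemma layer_rec:
  fixes u :: "nat \<Rightarrow> complex"
  assumes pos: "\<forall>j\<le>K. 0 < be j \<and> 0 \<le> al j \<and> al j + be j \<le> d j"
    and row0: "of_real (d 0) * u 0 - of_real (be 0) * u 1 = 0"
    and rows: "\<forall>j. 0 < j \<and> j \<le> K \<longrightarrow>
       - of_real (al j) * u (j-1) + of_real (d j) * u j - of_real (be j) * u (Suc j) = 0"
  shows "j \<le> K \<Longrightarrow> of_real (Dp d al be j) * u j = of_real (be j) * u (Suc j)"
proof (induction j)
  case 0 thus ?case using row0 by simp
next
  case (Suc j)
  hence IH: "of_real (Dp d al be j) * u j = of_real (be j) * u (Suc j)" by auto
  have jK: "j \<le> K" using Suc.prems by simp
  have Dpos: "0 < Dp d al be j" using Dp_ge[OF pos jK] pos jK by (meson less_le_trans)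
  have uj: "u j = of_real (be j / Dp d al be j) * u (Suc j)"
    using IH Dpos by (simp add: field_simps)
  have r: "- of_real (al (Suc j)) * u j + of_real (d (Suc j)) * u (Suc j) - of_real (be (Suc j)) * u (Suc (Suc j)) = 0"
    using rows Suc.prems by auto
  show ?case using r unfolding uj by (simp add: algebra_simps)
qed

lemma back_zero:
  fixes u :: "nat \<Rightarrow> complex"
  assumes "\<forall>j<K. g j * u j = b j * u (Suc j) \<and> g j \<noteq> 0" and "u K = 0"
  shows "\<forall>j\<le>K. u j = 0"
proof -
  have "\<forall>i\<le>K. u (K - i) = 0"
  proof (intro allI impI)
    fix i assume "i \<le> K" thus "u (K - i) = 0"
    proof (induction i)
      case 0 thus ?case using assms by simp
    next
      case (Suc i)
      hence "u (K - i) = 0" by auto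
      moreover have "Suc (K - Suc i) = K - i" using Suc.prems by auto
      moreover have "K - Suc i < K" using Suc.prems by auto
      ultimately show ?case using assms by (metis mult_eq_0_iff mult_zero_right)
    qed
  qed
  thus ?thesis by (metis diff_diff_cancel diff_le_self)
qed

lemma row_tri:
  fixes B :: "complex mat"
  assumes B: "B \<in> carrier_mat n n" and v: "v \<in> carrier_vec n" and j: "j < n"
    and ent: "\<forall>k<n. B $$ (j,k) = (if k = j then x else if Suc k = j then y else if k = Suc j then z else 0)"
  shows "(B *\<^sub>v v) $ j = x * v $ j + (if 0 < j then y * v $ (j-1) else 0) + (if Suc j < n then z * v $ (Suc j) else 0)"
proof -
  have "(B *\<^sub>v v) $ j = (\<Sum>k<n. B $$ (j,k) * v $ k)"
    using B v j by (simp add: mult_mat_vec_def scalar_prod_def lessThan_atLeast0)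
  also have "\<dots> = (\<Sum>k<n. (if k = j then x * v $ j else if Suc k = j then y * v $ (j-1) else if k = Suc j then z * v $ (Suc j) else 0))"
    by (rule sum.cong) (auto simp: ent)
  also have "\<dots> = (if j < n then x * v $ j else 0) + (if 0 < j \<and> j - 1 < n then y * v $ (j-1) else 0) + (if Suc j < n then z * v $ (Suc j) else 0)"
    by (rule tri_sum)
  finally show ?thesis using j by auto
qed


lemma al_bound:
  fixes h1 h2 eps C cc D alpha Nr :: real
  assumes "0<h1" "0<h2" "0<eps" "0<C" "C \<le> cc" "cc/h2 \<le> D" "0<alpha" "0<Nr" "alpha/Nr \<le> h1"
  shows "eps/(h1*((h1+h2)/2)) \<le> 2*eps*Nr/(C*alpha) * D"
proof -
  have "h1*h2/2 \<le> h1*((h1+h2)/2)" using assms by (simp add: field_simps)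
  hence "eps/(h1*((h1+h2)/2)) \<le> eps/(h1*h2/2)"
    using assms by (intro divide_left_mono) auto
  also have "\<dots> = 2*eps/(h1*h2)" by simp
  also have "\<dots> \<le> 2*eps*Nr/(alpha*h2)"
  proof -
    have "alpha \<le> h1 * Nr" using assms by (simp add: field_simps)
    thus ?thesis using assms by (simp add: field_simps mult_left_mono)
  qed
  also have "\<dots> = 2*eps*Nr/(C*alpha) * (C/h2)" using assms by (simp add: field_simps)
  also have "\<dots> \<le> 2*eps*Nr/(C*alpha) * D"
  proof -
    have "C/h2 \<le> cc/h2" using assms by (simp add: divide_right_mono)
    thus ?thesis using assms by (intro mult_left_mono) auto
  qed
  finally show ?thesis .
qed

lemma eq_aux:
  fixes nu D B Al U0 U1 U2 :: complex
  assumes "nu^2 * (D*U1 - B*U2) = Al*U0"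
  shows "nu * D * (nu^(Suc j)*U1) = Al*(nu^j*U0) + B*(nu^(Suc (Suc j))*U2)"
proof -
  have "Al*(nu^j*U0) = nu^j * (nu^2*(D*U1 - B*U2))" using assms by simp
  thus ?thesis by (simp add: algebra_simps power2_eq_square)
qed


theorem theorem2p5:
  fixes eps Clow Cup alpha :: real and c r :: "real \<Rightarrow> real" and mx :: "nat \<Rightarrow> real"
    and N NL :: nat
  assumes eps_pos: "0 < eps" and eps_le1: "eps \<le> 1"
    and Clow_pos: "0 < Clow" and c_bounds: "\<forall>t\<in>{0..1}. Clow \<le> c t \<and> c t \<le> Cup"
    and r_nonneg: "\<forall>t\<in>{0..1}. 0 \<le> r t"
    and mesh0: "mx 0 = 0" and meshN: "mx N = 1" and mesh_incr: "\<forall>i<N. mx i < mx (Suc i)"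
    and NL_pos: "1 \<le> NL" and NL_le: "NL \<le> N - 1"
    and alpha_pos: "0 < alpha"
    and mesh_interior: "\<forall>i. NL + 1 \<le> i \<and> i \<le> N \<longrightarrow> alpha / real N \<le> mesh_h mx i"
  shows "invertible_mat (block_precond (upwind_matrix eps c r mx N) NL) \<and>
    (\<forall>Mi lam. inverts_mat (block_precond (upwind_matrix eps c r mx N) NL) Mi
              \<and> inverts_mat Mi (block_precond (upwind_matrix eps c r mx N) NL)
        \<longrightarrow> eigenvalue (map_mat complex_of_real (Mi * upwind_matrix eps c r mx N)) lam
        \<longrightarrow> lam \<in> \<real> \<and> 1 - 8 * eps * real N / (Clow * alpha) \<le> Re lam \<and> Re lam \<le> 1)"
proof -
  define n where "n = N - 1"
  define h where "h = mesh_h mx"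
  define hb where "hb = mesh_hbar mx"
  define al where "al = (\<lambda>j. eps / (h (Suc j) * hb (Suc j)))"
  define be where "be = (\<lambda>j. eps / (h (Suc (Suc j)) * hb (Suc j)) + c (mx (Suc j)) / h (Suc (Suc j)))"
  define d where "d = (\<lambda>j. eps / hb (Suc j) * (1 / h (Suc j) + 1 / h (Suc (Suc j))) + c (mx (Suc j)) / h (Suc (Suc j)) + r (mx (Suc j)))"
  define A where "A = upwind_matrix eps c r mx N"
  define Mb where "Mb = block_precond A NL"
  define q where "q = 2 * eps * real N / (Clow * alpha)"
  have N2: "2 \<le> N" using NL_pos NL_le by linarith
  have nN: "Suc n = N" using N2 by (simp add: n_def)
  have NLn: "NL \<le> n" using NL_le by (simp add: n_def)
  have mono0: "mx 0 \<le> mx i" if "i \<le> N" for i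
    using that
  proof (induction i)
    case 0 thus ?case by simp
  next
    case (Suc i) thus ?case using mesh_incr by (metis Suc_le_lessD less_imp_le order_trans Suc_leD)
  qed
  have mono1: "mx i \<le> mx (i + k)" if "i + k \<le> N" for i k
    using that
  proof (induction k)
    case 0 thus ?case by simp
  next
    case (Suc k)
    hence "mx i \<le> mx (i + k)" by simp
    moreover have "mx (i + k) < mx (Suc (i + k))" using mesh_incr Suc.prems by simp
    ultimately show ?case by simp
  qed
  have mxr: "mx i \<in> {0..1}" if "i \<le> N" for i
  proof -
    have "mx i \<le> mx (i + (N - i))" using mono1[of i "N - i"] that by simp
    thus ?thesis using mono0[OF that] mesh0 meshN that by simp
  qed
  have hpos: "0 < h i" if "1 \<le> i" "i \<le> N" for i
  proof -
    have "i - 1 < N" using that by simp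
    hence "mx (i - 1) < mx (Suc (i - 1))" using mesh_incr by blast
    moreover have "Suc (i - 1) = i" using that by simp
    ultimately show ?thesis using that by (simp add: h_def mesh_h_def)
  qed
  have cb: "Clow \<le> c (mx (Suc j))" if "j < n" for j
    using c_bounds mxr[of "Suc j"] that nN by auto
  have rb: "0 \<le> r (mx (Suc j))" if "j < n" for j
    using r_nonneg mxr[of "Suc j"] that nN by auto
  have h1: "0 < h (Suc j)" if "j < n" for j using hpos that nN by auto
  have h2: "0 < h (Suc (Suc j))" if "j < n" for j using hpos that nN by auto
  have hbeq: "hb (Suc j) = (h (Suc j) + h (Suc (Suc j))) / 2" for j
    by (simp add: hb_def h_def mesh_hbar_def)
  have hbpos: "0 < hb (Suc j)" if "j < n" for j using h1[OF that] h2[OF that] hbeq[of j] by simp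
  have alpos: "0 < al j" if "j < n" for j
    using h1[OF that] hbpos[OF that] eps_pos by (simp add: al_def)
  have bepos: "0 < be j" if "j < n" for j
  proof -
    have "0 < eps / (h (Suc (Suc j)) * hb (Suc j))" using h2[OF that] hbpos[OF that] eps_pos by simp
    moreover have "0 < c (mx (Suc j)) / h (Suc (Suc j))" using h2[OF that] cb[OF that] Clow_pos by simp
    ultimately show ?thesis by (simp add: be_def)
  qed
  have dsum: "d j = al j + be j + r (mx (Suc j))" if "j < n" for j
    using h1[OF that] h2[OF that] hbpos[OF that]
    by (simp add: d_def al_def be_def field_simps)
  have dge: "al j + be j \<le> d j" if "j < n" for j using dsum[OF that] rb[OF that] by simp
  have dpos: "0 < d j" if "j < n" for j using dge[OF that] alpos[OF that] bepos[OF that] by simp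
  have pos: "\<forall>j\<le>K. 0 < be j \<and> 0 \<le> al j \<and> al j + be j \<le> d j" if "K < n" for K
    using that alpos bepos dge by (auto simp: less_imp_le)
  have alq: "al j \<le> q * d j" if "NL < j" "j < n" for j
  proof -
    have "alpha / real N \<le> h (Suc j)" using mesh_interior that nN by (auto simp: h_def)
    moreover have "c (mx (Suc j)) / h (Suc (Suc j)) \<le> d j"
    proof -
      have "0 \<le> eps / hb (Suc j) * (1 / h (Suc j) + 1 / h (Suc (Suc j)))"
        using h1[OF that(2)] h2[OF that(2)] hbpos[OF that(2)] eps_pos by simp
      thus ?thesis using rb[OF that(2)] by (simp add: d_def)
    qed
    ultimately have "eps/(h (Suc j)*((h (Suc j)+h (Suc (Suc j)))/2)) \<le> 2*eps*real N/(Clow*alpha) * d j"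
      using al_bound h1[OF that(2)] h2[OF that(2)] eps_pos Clow_pos cb[OF that(2)] alpha_pos N2 by simp
    thus ?thesis by (simp add: al_def q_def hbeq)
  qed
  have Acar: "A \<in> carrier_mat n n" by (simp add: A_def upwind_matrix_def n_def)
  have Mcar: "Mb \<in> carrier_mat n n" using Acar by (simp add: Mb_def block_precond_def)
  have Aent: "A $$ (j,k) = (if k = j then d j else if Suc k = j then - al j else if k = Suc j then - be j else 0)"
    if "j < n" "k < n" for j k
    using that by (simp add: A_def upwind_matrix_def Let_def d_def al_def be_def h_def hb_def n_def)
  have Ment: "Mb $$ (j,k) = (if k = j then d j else if Suc k = j then (if NL \<le> k then 0 else - al j) else if k = Suc j then - be j else 0)"
    if "j < n" "k < n" for j k
    using that Acar Aent[OF that] by (auto simp: Mb_def block_precond_def)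
  define Ac where "Ac = map_mat complex_of_real A"
  define Mc where "Mc = map_mat complex_of_real Mb"
  have Accar: "Ac \<in> carrier_mat n n" using Acar by (simp add: Ac_def)
  have Mccar: "Mc \<in> carrier_mat n n" using Mcar by (simp add: Mc_def)
  have rowA: "(Ac *\<^sub>v v) $ j = of_real (d j) * v $ j + (if 0 < j then of_real (- al j) * v $ (j-1) else 0)
      + (if Suc j < n then of_real (- be j) * v $ (Suc j) else 0)"
    if "v \<in> carrier_vec n" "j < n" for v j
    by (rule row_tri[OF Accar that]) (use Acar that in \<open>auto simp: Ac_def Aent\<close>)
  have rowM: "(Mc *\<^sub>v v) $ j = of_real (d j) * v $ j + (if 0 < j then of_real (if NL \<le> j - 1 then 0 else - al j) * v $ (j-1) else 0)
      + (if Suc j < n then of_real (- be j) * v $ (Suc j) else 0)"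
    if "v \<in> carrier_vec n" "j < n" for v j
    by (rule row_tri[OF Mccar that]) (use Mcar that in \<open>auto simp: Mc_def Ment\<close>)
  have allzero: "\<forall>j<n. u j = 0" if un: "u n = 0"
    and lay: "\<forall>j<n. j \<le> NL \<longrightarrow> (if 0<j then - of_real (al j) * u (j-1) else 0) + of_real (d j) * u j - of_real (be j) * u (Suc j) = 0"
    and int: "\<forall>j<n. NL < j \<longrightarrow> of_real (d j) * u j = of_real (be j) * u (Suc j)"
    for u :: "nat \<Rightarrow> complex"
  proof -
    define K where "K = min NL (n - 1)"
    have n1: "1 \<le> n" using N2 nN by simp
    have Kn: "K < n" using n1 by (simp add: K_def)
    have row0: "of_real (d 0) * u 0 - of_real (be 0) * u 1 = 0" using lay n1 by auto
    have rows: "\<forall>j. 0 < j \<and> j \<le> K \<longrightarrow>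
       - of_real (al j) * u (j-1) + of_real (d j) * u j - of_real (be j) * u (Suc j) = 0"
    proof (intro allI impI)
      fix j assume j: "0 < j \<and> j \<le> K"
      hence "j < n" "j \<le> NL" using Kn by (auto simp: K_def)
      hence "(if 0<j then - of_real (al j) * u (j-1) else 0) + of_real (d j) * u j - of_real (be j) * u (Suc j) = 0"
        using lay by blast
      thus "- of_real (al j) * u (j-1) + of_real (d j) * u j - of_real (be j) * u (Suc j) = 0" using j by simp
    qed
    have L: "of_real (Dp d al be j) * u j = of_real (be j) * u (Suc j)" if "j \<le> K" for j
      using layer_rec[OF pos[OF Kn] row0 rows that] .
    define g where "g = (\<lambda>j. complex_of_real (if j \<le> K then Dp d al be j else d j))"
    have "\<forall>j<n. g j * u j = of_real (be j) * u (Suc j) \<and> g j \<noteq> 0"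
    proof (intro allI impI conjI)
      fix j assume j: "j < n"
      show "g j * u j = of_real (be j) * u (Suc j)"
      proof (cases "j \<le> K")
        case True thus ?thesis using L by (simp add: g_def)
      next
        case False hence "NL < j" using j by (auto simp: K_def)
        thus ?thesis using False int j by (simp add: g_def)
      qed
      show "g j \<noteq> 0"
      proof (cases "j \<le> K")
        case True
        have "be j \<le> Dp d al be j" using Dp_ge[OF pos[OF Kn] True] .
        thus ?thesis using True bepos[OF j] by (simp add: g_def)
      next
        case False thus ?thesis using dpos[OF j] by (simp add: g_def)
      qed
    qed
    from back_zero[OF this un] show ?thesis by simp
  qed
  have detnz: "det Mb \<noteq> 0"
  proof
    assume "det Mb = 0"
    hence "det Mc = 0" by (simp add: Mc_def)
    then obtain v where v: "v \<in> carrier_vec n" "v \<noteq> 0\<^sub>v n" "Mc *\<^sub>v v = 0\<^sub>v n"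
      using det_0_iff_vec_prod_zero[OF Mccar] by blast
    define u where "u = (\<lambda>k. if k < n then v $ k else 0)"
    have R: "(Mc *\<^sub>v v) $ j = 0" if "j < n" for j using v that by simp
    have "\<forall>j<n. u j = 0"
    proof (rule allzero)
      show "u n = 0" by (simp add: u_def)
      show "\<forall>j<n. j \<le> NL \<longrightarrow> (if 0<j then - of_real (al j) * u (j-1) else 0) + of_real (d j) * u j - of_real (be j) * u (Suc j) = 0"
      proof (intro allI impI)
        fix j assume j: "j < n" "j \<le> NL"
        have nl: "(NL \<le> j - 1) = False" if "0 < j" using j that by auto
        show "(if 0<j then - of_real (al j) * u (j-1) else 0) + of_real (d j) * u j - of_real (be j) * u (Suc j) = 0"
          using R[OF j(1)] rowM[OF v(1) j(1)] j by (cases j) (auto simp: u_def)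
      qed
      show "\<forall>j<n. NL < j \<longrightarrow> of_real (d j) * u j = of_real (be j) * u (Suc j)"
      proof (intro allI impI)
        fix j assume j: "j < n" "NL < j"
        have nl: "NL \<le> j - 1" "0 < j" using j by auto
        show "of_real (d j) * u j = of_real (be j) * u (Suc j)"
          using R[OF j(1)] rowM[OF v(1) j(1)] j by (cases j) (auto simp: u_def)
      qed
    qed
    hence "v = 0\<^sub>v n" using v(1) by (auto simp: u_def)
    thus False using v(2) by simp
  qed
  have invM: "invertible_mat Mb"
  proof -
    from det_non_zero_imp_unit[OF Mcar detnz, unfolded Units_def, of "()"]
    obtain B where B: "B \<in> carrier_mat n n" and BA: "B * Mb = 1\<^sub>m n" and AB: "Mb * B = 1\<^sub>m n"
      by (auto simp: ring_mat_def)
    thus ?thesis using Mcar unfolding invertible_mat_def inverts_mat_def square_mat.simps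
      by (metis carrier_matD(1) carrier_matD(2))
  qed
  have eig: "lam \<in> \<real> \<and> 1 - 8 * eps * real N / (Clow * alpha) \<le> Re lam \<and> Re lam \<le> 1"
    if inv: "inverts_mat Mb Mi \<and> inverts_mat Mi Mb" and ev: "eigenvalue (map_mat complex_of_real (Mi * A)) lam" for Mi lam
  proof -
    have MbMi: "Mb * Mi = 1\<^sub>m n" using inv Mcar by (simp add: inverts_mat_def)
    have MiMb: "Mi * Mb = 1\<^sub>m (dim_row Mi)" using inv by (simp add: inverts_mat_def)
    have "dim_col Mi = n" using arg_cong[OF MbMi, of dim_col] by simp
    moreover have "dim_row Mi = n" using arg_cong[OF MiMb, of dim_col] Mcar by simp
    ultimately have Micar: "Mi \<in> carrier_mat n n" by auto
    obtain v where v: "v \<in> carrier_vec n" "v \<noteq> 0\<^sub>v n" and vev: "map_mat complex_of_real (Mi * A) *\<^sub>v v = lam \<cdot>\<^sub>v v"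
      using ev Micar Acar unfolding eigenvalue_def eigenvector_def by auto
    define Mic where "Mic = map_mat complex_of_real Mi"
    have Miccar: "Mic \<in> carrier_mat n n" using Micar by (simp add: Mic_def)
    have hom1: "map_mat complex_of_real (Mi * A) = Mic * Ac"
      unfolding Mic_def Ac_def by (rule of_real_hom.mat_hom_mult[OF Micar Acar])
    have hom2: "Mc * Mic = 1\<^sub>m n"
      using of_real_hom.mat_hom_mult[OF Mcar Micar] MbMi of_real_hom.mat_hom_one unfolding Mc_def Mic_def by metis
    have AvMv: "Ac *\<^sub>v v = lam \<cdot>\<^sub>v (Mc *\<^sub>v v)"
    proof -
      have "Ac *\<^sub>v v = (Mc * Mic * Ac) *\<^sub>v v" using hom2 Accar by simp
      also have "\<dots> = Mc *\<^sub>v (Mic *\<^sub>v (Ac *\<^sub>v v))"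
        using assoc_mult_mat_vec[OF mult_carrier_mat[OF Mccar Miccar] Accar v(1)]
          assoc_mult_mat_vec[OF Mccar Miccar mult_mat_vec_carrier[OF Accar v(1)]] by simp
      also have "Mic *\<^sub>v (Ac *\<^sub>v v) = lam \<cdot>\<^sub>v v" using vev hom1 Miccar Accar v(1) by simp
      also have "Mc *\<^sub>v (lam \<cdot>\<^sub>v v) = lam \<cdot>\<^sub>v (Mc *\<^sub>v v)" using Mccar v(1) by (rule mult_mat_vec)
      finally show ?thesis .
    qed
    define mu where "mu = 1 - lam"
    show ?thesis
    proof (cases "mu = 0")
      case True
      hence "lam = 1" by (simp add: mu_def)
      moreover have "0 \<le> 8 * eps * real N / (Clow * alpha)" using eps_pos Clow_pos alpha_pos by simp
      ultimately show ?thesis by simp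
    next
      case False
      define u where "u = (\<lambda>k. if k < n then v $ k else 0)"
      have un: "u n = 0" by (simp add: u_def)
      have rowrel: "(Ac *\<^sub>v v) $ j = lam * (Mc *\<^sub>v v) $ j" if "j < n" for j
        using AvMv that Mccar by simp
      have lay: "\<forall>j<n. j \<le> NL \<longrightarrow> (if 0<j then - of_real (al j) * u (j-1) else 0) + of_real (d j) * u j - of_real (be j) * u (Suc j) = 0"
      proof (intro allI impI)
        fix j assume j: "j < n" "j \<le> NL"
        define X where "X = (if 0<j then - of_real (al j) * u (j-1) else 0) + of_real (d j) * u j - of_real (be j) * u (Suc j)"
        have "(Ac *\<^sub>v v) $ j = X"
          using rowA[OF v(1) j(1)] j by (cases j) (auto simp: u_def X_def)
        moreover have "(Mc *\<^sub>v v) $ j = X"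
          using rowM[OF v(1) j(1)] j by (cases j) (auto simp: u_def X_def)
        ultimately have "X = lam * X" using rowrel[OF j(1)] by simp
        hence "mu * X = 0" by (simp add: mu_def algebra_simps)
        thus "X = 0" using False by simp
      qed
      have int: "mu * (of_real (d j) * u j - of_real (be j) * u (Suc j)) = of_real (al j) * u (j-1)" if "j < n" "NL < j" for j
      proof -
        define X where "X = of_real (d j) * u j - of_real (be j) * u (Suc j)"
        have "(Ac *\<^sub>v v) $ j = - of_real (al j) * u (j-1) + X"
          using rowA[OF v(1) that(1)] that by (cases j) (auto simp: u_def X_def)
        moreover have "(Mc *\<^sub>v v) $ j = X"
          using rowM[OF v(1) that(1)] that by (cases j) (auto simp: u_def X_def)
        ultimately have h: "- of_real (al j) * u (j-1) + X = lam * X" using rowrel[OF that(1)] by simp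
        have "mu * X = X - lam * X" by (simp add: mu_def algebra_simps)
        also have "\<dots> = X - (- of_real (al j) * u (j-1) + X)" using h by simp
        also have "\<dots> = of_real (al j) * u (j-1)" by simp
        finally show ?thesis by (simp add: X_def)
      qed
      show ?thesis
      proof (cases "\<forall>j. NL \<le> j \<and> j < n \<longrightarrow> u j = 0")
        case True
        have "\<forall>j<n. u j = 0"
        proof (rule allzero[OF un lay])
          show "\<forall>j<n. NL < j \<longrightarrow> of_real (d j) * u j = of_real (be j) * u (Suc j)"
          proof (intro allI impI)
            fix j assume j: "j < n" "NL < j"
            have "u j = 0" using True j by auto
            moreover have "u (Suc j) = 0"
            proof (cases "Suc j < n")
              case True2: True thus ?thesis using True j by auto
            next
              case False thus ?thesis using j un by (metis Suc_lessI)
            qed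
            ultimately show "of_real (d j) * u j = of_real (be j) * u (Suc j)" by simp
          qed
        qed
        hence "v = 0\<^sub>v n" using v(1) by (auto simp: u_def)
        thus ?thesis using v(2) by simp
      next
        case False2: False
        then obtain j0 where j0: "NL \<le> j0" "j0 < n" "u j0 \<noteq> 0" by auto
        have NLlt: "NL < n" using j0 by simp
        have row0: "of_real (d 0) * u 0 - of_real (be 0) * u 1 = 0" using lay NLlt by auto
        have rows: "\<forall>j. 0 < j \<and> j \<le> NL \<longrightarrow>
           - of_real (al j) * u (j-1) + of_real (d j) * u j - of_real (be j) * u (Suc j) = 0"
        proof (intro allI impI)
          fix j assume j: "0 < j \<and> j \<le> NL"
          hence "j < n" using NLlt by simp
          hence "(if 0<j then - of_real (al j) * u (j-1) else 0) + of_real (d j) * u j - of_real (be j) * u (Suc j) = 0"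
            using lay j by blast
          thus "- of_real (al j) * u (j-1) + of_real (d j) * u j - of_real (be j) * u (Suc j) = 0" using j by simp
        qed
        have LNL: "of_real (Dp d al be NL) * u NL = of_real (be NL) * u (Suc NL)"
          using layer_rec[OF pos[OF NLlt] row0 rows] by simp
        have DpNL: "be NL \<le> Dp d al be NL" using Dp_ge[OF pos[OF NLlt]] by simp
        define nu where "nu = csqrt mu"
        have nu2: "nu^2 = mu" by (simp add: nu_def)
        define m where "m = n - NL"
        define Y where "Y = (\<lambda>k. nu^(NL+k) * u (NL+k))"
        define dl where "dl = (\<lambda>k. if k = 0 then Dp d al be NL else d (NL+k))"
        define a where "a = (\<lambda>k. if k = 0 then 0 else al (NL+k))"
        define b where "b = (\<lambda>k. be (NL+k))"
        have J: "nu \<in> \<real> \<and> (Re nu)^2 \<le> 4*q"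
        proof (rule jacobi)
          show "\<forall>k<m. 0 < dl k"
            using DpNL bepos[OF NLlt] dpos by (auto simp: dl_def m_def)
          show "a 0 = 0" by (simp add: a_def)
          show "\<forall>k. 0<k \<and> k<m \<longrightarrow> 0 < a k" using alpos by (auto simp: a_def m_def)
          show "\<forall>k. Suc k < m \<longrightarrow> 0 < b k" using bepos by (auto simp: b_def m_def)
          show "Y m = 0" using un NLlt by (simp add: Y_def m_def)
          show "\<exists>k<m. Y k \<noteq> 0"
          proof (intro exI conjI)
            show "j0 - NL < m" using j0 by (simp add: m_def)
            have "NL + (j0 - NL) = j0" using j0 by simp
            moreover have "nu \<noteq> 0" using False nu2 by auto
            ultimately show "Y (j0 - NL) \<noteq> 0" using j0 by (simp add: Y_def)
          qed
          show "0 \<le> q" using eps_pos Clow_pos alpha_pos by (simp add: q_def)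
          show "\<forall>k<m. nu * dl k * Y k = a k * Y (k-1) + b k * Y (Suc k)"
          proof (intro allI impI)
            fix k assume k: "k < m"
            show "nu * dl k * Y k = a k * Y (k-1) + b k * Y (Suc k)"
            proof (cases k)
              case 0
              have "nu * dl k * Y k = nu^(Suc NL) * (of_real (Dp d al be NL) * u NL)"
                using 0 by (simp add: dl_def Y_def algebra_simps)
              also have "\<dots> = nu^(Suc NL) * (of_real (be NL) * u (Suc NL))" using LNL by simp
              also have "\<dots> = a k * Y (k-1) + b k * Y (Suc k)"
                using 0 by (simp add: a_def b_def Y_def algebra_simps)
              finally show ?thesis .
            next
              case (Suc k')
              have jn: "Suc (NL + k') < n" "NL < Suc (NL + k')" using k Suc by (auto simp: m_def)
              have E: "nu^2 * (of_real (d (Suc (NL + k'))) * u (Suc (NL + k')) - of_real (be (Suc (NL + k'))) * u (Suc (Suc (NL + k'))))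
                  = of_real (al (Suc (NL + k'))) * u (NL + k')"
                using int[OF jn] nu2 by simp
              show ?thesis using eq_aux[OF E] Suc by (simp add: dl_def a_def b_def Y_def)
            qed
          qed
          show "\<forall>k. 0<k \<and> k<m \<longrightarrow> a k * b (k-1) \<le> q * dl k * dl (k-1)"
          proof (intro allI impI)
            fix k assume k: "0<k \<and> k<m"
            have j: "NL < NL + k" "NL + k < n" using k by (auto simp: m_def)
            have A1: "al (NL+k) \<le> q * d (NL+k)" using alq[OF j] .
            have A2: "be (NL + k - 1) \<le> dl (k-1)"
            proof (cases "k = 1")
              case True thus ?thesis using DpNL by (simp add: dl_def)
            next
              case False
              hence "NL + k - 1 < n" "NL + (k - 1) = NL + k - 1" using j k by auto
              thus ?thesis using dge[of "NL + k - 1"] alpos[of "NL + k - 1"] False k by (simp add: dl_def)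
            qed
            have "al (NL+k) * be (NL + k - 1) \<le> (q * d (NL+k)) * dl (k-1)"
            proof (rule mult_mono[OF A1 A2])
              have "NL + k - 1 < n" using j by simp
              hence "0 < be (NL + k - 1)" by (rule bepos)
              thus "0 \<le> be (NL + k - 1)" by simp
              show "0 \<le> q * d (NL + k)" using A1 alpos[OF j(2)] by simp
            qed
            thus "a k * b (k-1) \<le> q * dl k * dl (k-1)" using k by (simp add: a_def b_def dl_def)
          qed
        qed
        have nure: "nu = complex_of_real (Re nu)" using J by (simp add: complex_is_Real_iff complex_eq_iff)
        have lamre: "lam = complex_of_real (1 - (Re nu)^2)"
        proof -
          have "lam = 1 - nu^2" using nu2 by (simp add: mu_def)
          also have "\<dots> = 1 - (complex_of_real (Re nu))^2" using nure by metis
          finally show ?thesis by simp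
        qed
        have "Re lam = 1 - (Re nu)^2" using lamre by simp
        moreover have "4 * q = 8 * eps * real N / (Clow * alpha)" by (simp add: q_def)
        ultimately show ?thesis using J lamre by simp
      qed
    qed
  qed
  show ?thesis using invM eig unfolding Mb_def A_def by blast
qed
end
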